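(* Let $L\ge 6$ be even, let $\eta\in V_{\mathrm{o}}$ and let $\ell_1,\ell_2$ be integers with $0\le \ell_1,\ell_2\le L$. Then: (i) If $\max\{\ell_1,\ell_2\}\le L-2$ and $\min\{\ell_1,\ell_2\}\ge L/2$, then the complement $V\setminus\mathcal{R}_{\ell_1,\ell_2}(\eta)$ is a rhombus $\mathcal{R}_{L-\ell_1-1,L-\ell_2-1}(\hat\eta)$ for some $\hat\eta\in V_{\mathrm{e}}$. (ii) If $\max\{\ell_1,\ell_2\}=L-1$ and $\min\{\ell_1,\ell_2\}\ge L/2$, then $V\setminus\mathcal{R}_{\ell_1,\ell_2}(\eta)$ is the disjoint union of $L-\min\{\ell_1,\ell_2\}$ odd sites. (iii) If $\max\{\ell_1,\ell_2\}=L$ and $\min\{\ell_1,\ell_2\}<L/2$, then $\mathcal{R}_{\ell_1,\ell_2}(\eta)$ contains exactly $L\min\{\ell_1,\ell_2\}$ odd sites and $L(\min\{\ell_1,\ell_2\}+1)$ even sites. (iv) If $\max\{\ell_1,\ell_2\}=L$ and $\min\{\ell_1,\ell_2\}\ge L/2$, then $\mathcal{R}_{\ell_1,\ell_2}(\eta)=V$.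
   Context: $L\ge 6$ is an even integer and $\Lambda=(V,E)$ is the $L\times L$ toric grid graph: $V=\{0,\dots,L-1\}^2$, two sites are adjacent iff they differ by $\pm1$ modulo $L$ in exactly one coordinate; all coordinate arithmetic is modulo $L$. A site is even (odd) if the sum of its coordinates is even (odd); $V_{\mathrm{e}}$, $V_{\mathrm{o}}$ denote the sets of even and odd sites. For $S\subseteq V$, $\partial^+S$ is the set of sites not in $S$ adjacent to some site of $S$. For a reference site $\eta=(\eta_1,\eta_2)$ and positive integers $\ell_1,\ell_2\le L$, set $S_{\ell_1,\ell_2}(\eta)=\{(\eta_1+k+j,\ \eta_2+k-j): 0\le k\le \ell_1-1,\ 0\le j\le \ell_2-1\}$ and define the rhombus $\mathcal{R}_{\ell_1,\ell_2}(\eta)=S_{\ell_1,\ell_2}(\eta)\cup\partial^+S_{\ell_1,\ell_2}(\eta)$. When $\eta\in V_{\mathrm{o}}$, $S_{\ell_1,\ell_2}(\eta)$ consists of odd sites and its boundary of even sites; when $\eta\in V_{\mathrm{e}}$ (as in (i)) the same formula defines a rhombus whose set $S$ consists of even sites and whose boundary consists of odd sites. *)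

theory Defs
  imports Main
begin

type_synonym site = "int \<times> int"

definition sites :: "int \<Rightarrow> site set" where
  "sites L = {0..<L} \<times> {0..<L}"

definition even_sites :: "int \<Rightarrow> site set" where
  "even_sites L = {v \<in> sites L. even (fst v + snd v)}"

definition odd_sites :: "int \<Rightarrow> site set" where
  "odd_sites L = {v \<in> sites L. odd (fst v + snd v)}"

definition adj :: "int \<Rightarrow> site \<Rightarrow> site \<Rightarrow> bool" where
  "adj L x y \<longleftrightarrow> x \<in> sites L \<and> y \<in> sites L \<and>
     ((fst x = fst y \<and> (snd y = (snd x + 1) mod L \<or> snd y = (snd x - 1) mod L)) \<or>
      (snd x = snd y \<and> (fst y = (fst x + 1) mod L \<or> fst y = (fst x - 1) mod L)))"

definition outer_boundary :: "int \<Rightarrow> site set \<Rightarrow> site set" where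
  "outer_boundary L S = {v \<in> sites L. v \<notin> S \<and> (\<exists>s\<in>S. adj L s v)}"

definition Sset :: "int \<Rightarrow> int \<Rightarrow> int \<Rightarrow> site \<Rightarrow> site set" where
  "Sset L l1 l2 \<eta> = {((fst \<eta> + k + j) mod L, (snd \<eta> + k - j) mod L) | k j.
       0 \<le> k \<and> k \<le> l1 - 1 \<and> 0 \<le> j \<and> j \<le> l2 - 1}"

definition rhombus :: "int \<Rightarrow> int \<Rightarrow> int \<Rightarrow> site \<Rightarrow> site set" where
  "rhombus L l1 l2 \<eta> = Sset L l1 l2 \<eta> \<union> outer_boundary L (Sset L l1 l2 \<eta>)"

end

theory Submission
  imports Defs
begin


definition Mp :: "int \<Rightarrow> site \<Rightarrow> int \<Rightarrow> int \<Rightarrow> site" where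
  "Mp L e k j = ((fst e + k + j) mod L, (snd e + k - j) mod L)"
definition Np :: "int \<Rightarrow> site \<Rightarrow> int \<Rightarrow> int \<Rightarrow> site" where
  "Np L e k j = ((fst e + 1 + k + j) mod L, (snd e + k - j) mod L)"
definition lat :: "int \<Rightarrow> int \<Rightarrow> int \<Rightarrow> int \<Rightarrow> int \<Rightarrow> bool" where
  "lat L k j k' j' \<longleftrightarrow> L dvd (k - k') + (j - j') \<and> L dvd (k - k') - (j - j')"

lemma Mp_eq: "Mp L e k j = Mp L e k' j' \<longleftrightarrow> lat L k j k' j'"
proof -
  have 1: "(fst e + k + j) - (fst e + k' + j') = (k - k') + (j - j')" by simp
  have 2: "(snd e + k - j) - (snd e + k' - j') = (k - k') - (j - j')" by simp
  show ?thesis unfolding Mp_def lat_def prod.inject mod_eq_dvd_iff 1 2 ..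
qed

lemma Np_eq: "Np L e k j = Np L e k' j' \<longleftrightarrow> lat L k j k' j'"
proof -
  have 1: "(fst e + 1 + k + j) - (fst e + 1 + k' + j') = (k - k') + (j - j')" by simp
  have 2: "(snd e + k - j) - (snd e + k' - j') = (k - k') - (j - j')" by simp
  show ?thesis unfolding Np_def lat_def prod.inject mod_eq_dvd_iff 1 2 ..
qed

lemma even_mod_iff: "even (L::int) \<Longrightarrow> even (a mod L) \<longleftrightarrow> even a"
  by (metis dvd_mod_iff)

lemma Mp_par: "even L \<Longrightarrow> even (fst (Mp L e k j) + snd (Mp L e k j)) \<longleftrightarrow> even (fst e + snd e)"
proof -
  assume L: "even L"
  have "even (fst (Mp L e k j) + snd (Mp L e k j)) \<longleftrightarrow> even ((fst e + k + j) + (snd e + k - j))"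
    unfolding Mp_def fst_conv snd_conv even_add even_mod_iff[OF L] ..
  also have "\<dots> \<longleftrightarrow> even (fst e + snd e)" by (simp add: even_add)
  finally show ?thesis .
qed

lemma Np_par: "even L \<Longrightarrow> even (fst (Np L e k j) + snd (Np L e k j)) \<longleftrightarrow> odd (fst e + snd e)"
proof -
  assume L: "even L"
  have "even (fst (Np L e k j) + snd (Np L e k j)) \<longleftrightarrow> even ((fst e + 1 + k + j) + (snd e + k - j))"
    unfolding Np_def fst_conv snd_conv even_add even_mod_iff[OF L] ..
  also have "\<dots> \<longleftrightarrow> odd (fst e + snd e)" by (simp add: even_add)
  finally show ?thesis .
qed

lemma Mp_Np_neq: "even L \<Longrightarrow> Mp L e k j \<noteq> Np L e k' j'"
  using Mp_par[of L e k j] Np_par[of L e k' j'] by auto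

lemma Np_Mp_neq: "even L \<Longrightarrow> Np L e k j \<noteq> Mp L e k' j'"
  using Mp_Np_neq by metis

lemma Mp_sites: "0 < L \<Longrightarrow> Mp L e k j \<in> sites L"
  unfolding Mp_def sites_def by auto
lemma Np_sites: "0 < L \<Longrightarrow> Np L e k j \<in> sites L"
  unfolding Np_def sites_def by auto

lemma cover:
  assumes "even L" "0 < L" "v \<in> sites L"
  shows "(\<exists>k j. v = Mp L e k j) \<or> (\<exists>k j. v = Np L e k j)"
proof -
  obtain x y where v: "v = (x,y)" by (cases v)
  have xy: "0 \<le> x" "x < L" "0 \<le> y" "y < L" using assms(3) v unfolding sites_def by auto
  show ?thesis
  proof (cases "even (x + y - fst e - snd e)")
    case True
    then obtain r where r: "x + y - fst e - snd e = 2 * r" by blast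
    define k where "k = r"
    define j where "j = x - fst e - r"
    have "fst e + k + j = x" "snd e + k - j = y" using r unfolding k_def j_def by auto
    hence "v = Mp L e k j" unfolding Mp_def v using xy by simp
    thus ?thesis by blast
  next
    case False
    then obtain r where r: "x + y - fst e - snd e - 1 = 2 * r" 
      by (metis even_diff odd_one oddE add_diff_cancel_right')
    define k where "k = r"
    define j where "j = x - fst e - 1 - r"
    have "fst e + 1 + k + j = x" "snd e + k - j = y" using r unfolding k_def j_def by auto
    hence "v = Np L e k j" unfolding Np_def v using xy by simp
    thus ?thesis by blast
  qed
qed

lemma adj_Mp:
  assumes "0 < L"
  shows "adj L (Mp L e k j) v \<longleftrightarrow> v \<in> {Np L e k j, Np L e (k-1) (j-1), Np L e k (j-1), Np L e (k-1) j}"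
proof -
  define X where "X = fst e + k + j"
  define Y where "Y = snd e + k - j"
  have M: "Mp L e k j = (X mod L, Y mod L)" unfolding Mp_def X_def Y_def by simp
  have N1: "Np L e k j = ((X + 1) mod L, Y mod L)" unfolding Np_def X_def Y_def by (simp add: algebra_simps)
  have N2: "Np L e (k-1) (j-1) = ((X - 1) mod L, Y mod L)" unfolding Np_def X_def Y_def by (simp add: algebra_simps)
  have N3: "Np L e k (j-1) = (X mod L, (Y + 1) mod L)" unfolding Np_def X_def Y_def by (simp add: algebra_simps)
  have N4: "Np L e (k-1) j = (X mod L, (Y - 1) mod L)" unfolding Np_def X_def Y_def by (simp add: algebra_simps)
  have s: "Mp L e k j \<in> sites L" "Np L e k j \<in> sites L" "Np L e (k-1) (j-1) \<in> sites L"
     "Np L e k (j-1) \<in> sites L" "Np L e (k-1) j \<in> sites L" using assms Mp_sites Np_sites by auto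
  show ?thesis
    unfolding adj_def using s unfolding M N1 N2 N3 N4
    by (cases v) (auto simp: mod_simps)
qed


definition Mi :: "int \<Rightarrow> site \<Rightarrow> (int \<times> int) set \<Rightarrow> site set" where
  "Mi L e A = (\<lambda>(k,j). Mp L e k j) ` A"
definition Ni :: "int \<Rightarrow> site \<Rightarrow> (int \<times> int) set \<Rightarrow> site set" where
  "Ni L e A = (\<lambda>(k,j). Np L e k j) ` A"

lemma NiI: "(a,b) \<in> A \<Longrightarrow> Np L e a b \<in> Ni L e A"
  unfolding Ni_def by force
lemma MiI: "(a,b) \<in> A \<Longrightarrow> Mp L e a b \<in> Mi L e A"
  unfolding Mi_def by force

lemma Sset_eq: "Sset L l1 l2 e = Mi L e ({0..<l1} \<times> {0..<l2})"
  unfolding Sset_def Mi_def Mp_def by force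

lemma boundary_eq:
  assumes L: "even L" "0 < L" and l: "1 \<le> l1" "1 \<le> l2"
  shows "outer_boundary L (Mi L e ({0..<l1} \<times> {0..<l2})) = Ni L e ({-1..<l1} \<times> {-1..<l2})"
proof
  show "outer_boundary L (Mi L e ({0..<l1} \<times> {0..<l2})) \<subseteq> Ni L e ({-1..<l1} \<times> {-1..<l2})"
  proof
    fix v assume "v \<in> outer_boundary L (Mi L e ({0..<l1} \<times> {0..<l2}))"
    then obtain k j where kj: "0 \<le> k" "k < l1" "0 \<le> j" "j < l2" and a: "adj L (Mp L e k j) v"
      unfolding outer_boundary_def Mi_def by auto
    have "v \<in> {Np L e k j, Np L e (k-1) (j-1), Np L e k (j-1), Np L e (k-1) j}"
      using a adj_Mp[OF L(2)] by blast
    then show "v \<in> Ni L e ({-1..<l1} \<times> {-1..<l2})"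
      using kj by (elim insertE emptyE) (auto intro!: NiI)
  qed
  show "Ni L e ({-1..<l1} \<times> {-1..<l2}) \<subseteq> outer_boundary L (Mi L e ({0..<l1} \<times> {0..<l2}))"
  proof
    fix v assume "v \<in> Ni L e ({-1..<l1} \<times> {-1..<l2})"
    then obtain a b where ab: "-1 \<le> a" "a < l1" "-1 \<le> b" "b < l2" and v: "v = Np L e a b"
      unfolding Ni_def by auto
    define k where "k = max a 0"
    define j where "j = max b 0"
    have kj: "0 \<le> k" "k < l1" "0 \<le> j" "j < l2" using ab l unfolding k_def j_def by auto
    have "v \<in> {Np L e k j, Np L e (k-1) (j-1), Np L e k (j-1), Np L e (k-1) j}"
      using ab unfolding v k_def j_def by (cases "a = -1"; cases "b = -1") auto
    hence adj: "adj L (Mp L e k j) v" using adj_Mp[OF L(2)] by blast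
    have vs: "v \<in> sites L" using v Np_sites L by auto
    have nS: "v \<notin> Mi L e ({0..<l1} \<times> {0..<l2})"
      unfolding Mi_def v by (auto simp add: Np_Mp_neq[OF L(1)])
    have "Mp L e k j \<in> Mi L e ({0..<l1} \<times> {0..<l2})" unfolding Mi_def using kj by auto
    then show "v \<in> outer_boundary L (Mi L e ({0..<l1} \<times> {0..<l2}))"
      unfolding outer_boundary_def using vs nS adj by blast
  qed
qed

lemma rhombus_eq:
  assumes L: "even L" "0 < L" and l: "1 \<le> l1" "1 \<le> l2"
  shows "rhombus L l1 l2 e = Mi L e ({0..<l1} \<times> {0..<l2}) \<union> Ni L e ({-1..<l1} \<times> {-1..<l2})"
  unfolding rhombus_def Sset_eq boundary_eq[OF assms] ..

lemma lat_char:
  assumes "L = 2 * m" "0 < m"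
  shows "lat L k j k' j' \<longleftrightarrow> (\<exists>s t. k' = k + m * s \<and> j' = j + m * t \<and> even (s + t))"
proof
  assume "lat L k j k' j'"
  then obtain u w where u: "(k - k') + (j - j') = L * u" and w: "(k - k') - (j - j') = L * w"
    unfolding lat_def by (auto elim!: dvdE)
  have "k' = k + m * (- u - w)" "j' = j + m * (w - u)" using u w assms(1) by (simp_all add: algebra_simps)
  moreover have "even ((- u - w) + (w - u))" by simp
  ultimately show "\<exists>s t. k' = k + m * s \<and> j' = j + m * t \<and> even (s + t)" by blast
next
  assume "\<exists>s t. k' = k + m * s \<and> j' = j + m * t \<and> even (s + t)"
  then obtain s t r where st: "k' = k + m * s" "j' = j + m * t" "s + t = 2 * r" by blast
  have "(k - k') + (j - j') = - (m * (s + t))" using st(1,2) by (simp add: algebra_simps)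
  also have "\<dots> = L * (- r)" by (subst st(3)) (simp add: assms(1))
  finally have "(k - k') + (j - j') = L * (- r)" .
  moreover have "(k - k') - (j - j') = L * (t - r)"
  proof -
    have "(k - k') - (j - j') = m * t - m * s" using st(1,2) by (simp add: algebra_simps)
    also have "\<dots> = m * (2 * t) - m * (s + t)" by (simp add: algebra_simps)
    also have "\<dots> = L * (t - r)" unfolding st(3) assms(1) by (simp add: algebra_simps)
    finally show ?thesis .
  qed
  ultimately show "lat L k j k' j'" unfolding lat_def by (metis dvd_triv_left)
qed

lemma bnd:
  fixes m s a b :: int
  assumes "0 < m" "a * m < m * s" "m * s < b * m"
  shows "a < s \<and> s < b"
  using assms by (metis mult.commute mult_less_cancel_left_pos)

lemma lat_sym: "lat L k j k' j' \<longleftrightarrow> lat L k' j' k j"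
proof -
  have "(k' - k) + (j' - j) = - ((k - k') + (j - j'))" "(k' - k) - (j' - j) = - ((k - k') - (j - j'))" by simp_all
  thus ?thesis unfolding lat_def by (simp only: dvd_minus_iff)
qed

lemma lat_swap: "lat L k j k' j' \<longleftrightarrow> lat L j k j' k'"
proof -
  have "(j - j') + (k - k') = (k - k') + (j - j')" "(j - j') - (k - k') = - ((k - k') - (j - j'))" by simp_all
  thus ?thesis unfolding lat_def by (simp only: dvd_minus_iff)
qed

lemma lat_shift: "lat L k j k' j' \<longleftrightarrow> lat L (k + a) (j + b) (k' + a) (j' + b)"
  unfolding lat_def by simp

lemma canon:
  assumes "L = 2 * m" "0 < m"
  shows "\<exists>k0 j0. 0 \<le> k0 \<and> k0 < 2 * m \<and> 0 \<le> j0 \<and> j0 < m \<and> lat L k j k0 j0"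
proof -
  define t where "t = - (j div m)"
  define k1 where "k1 = k + m * t"
  define s where "s = t - 2 * (k1 div (2 * m))"
  have j0: "j mod m = j + m * t" unfolding t_def by (simp add: minus_div_mult_eq_mod[symmetric] algebra_simps)
  have k0: "k1 mod (2 * m) = k + m * s" unfolding s_def k1_def
    by (simp add: minus_div_mult_eq_mod[symmetric] algebra_simps)
  have "lat L k j (k + m * s) (j + m * t)"
    unfolding lat_char[OF assms] by (rule exI[of _ s], rule exI[of _ t]) (simp add: s_def)
  hence "lat L k j (k1 mod (2 * m)) (j mod m)" using j0 k0 by simp
  moreover have "0 \<le> k1 mod (2 * m)" "k1 mod (2 * m) < 2 * m" "0 \<le> j mod m" "j mod m < m"
    using assms by auto
  ultimately show ?thesis by blast
qed

lemma canon':
  assumes "L = 2 * m" "0 < m"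
  shows "\<exists>k0 j0. 0 \<le> k0 \<and> k0 < m \<and> 0 \<le> j0 \<and> j0 < 2 * m \<and> lat L k j k0 j0"
  using canon[OF assms, of j k] lat_swap by blast


lemma lat_trans: "lat L a b c d \<Longrightarrow> lat L c d e f \<Longrightarrow> lat L a b e f"
proof -
  assume 1: "lat L a b c d" and 2: "lat L c d e f"
  have "(a - e) + (b - f) = ((a - c) + (b - d)) + ((c - e) + (d - f))"
       "(a - e) - (b - f) = ((a - c) - (b - d)) + ((c - e) - (d - f))" by simp_all
  thus ?thesis using 1 2 unfolding lat_def by (metis dvd_add)
qed

lemma s3:
  fixes m s :: int
  assumes "0 < m" "- 2 * m < m * s" "m * s < 2 * m"
  shows "s = -1 \<or> s = 0 \<or> s = 1"
  using bnd[of m "-2" s 2] assms by auto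

lemma s01:
  fixes m s :: int
  assumes "0 < m" "- m < m * s" "m * s < 2 * m"
  shows "s = 0 \<or> s = 1"
  using bnd[of m "-1" s 2] assms by auto

lemma s0:
  fixes m s :: int
  assumes "0 < m" "- m < m * s" "m * s < m"
  shows "s = 0"
  using bnd[of m "-1" s 1] assms by auto

lemma K0:
  assumes L: "L = 2 * m" "0 < m" and l: "m \<le> l1" "l1 \<le> 2 * m" "m \<le> l2" "l2 \<le> 2 * m"
    and kj: "0 \<le> k0" "k0 < 2 * m" "0 \<le> j0" "j0 < m"
  shows "(\<exists>k' j'. 0 \<le> k' \<and> k' < l1 \<and> 0 \<le> j' \<and> j' < l2 \<and> lat L k0 j0 k' j') \<longleftrightarrow>
         \<not> (\<exists>k' j'. l1 \<le> k' \<and> k' < 2 * m \<and> l2 - m \<le> j' \<and> j' < m \<and> lat L k0 j0 k' j')"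
proof -
  have A: "(\<exists>k' j'. 0 \<le> k' \<and> k' < l1 \<and> 0 \<le> j' \<and> j' < l2 \<and> lat L k0 j0 k' j') \<longleftrightarrow>
           (k0 < l1 \<or> (m \<le> k0 \<and> j0 + m < l2))"
  proof
    assume "\<exists>k' j'. 0 \<le> k' \<and> k' < l1 \<and> 0 \<le> j' \<and> j' < l2 \<and> lat L k0 j0 k' j'"
    then obtain s t where st: "0 \<le> k0 + m * s" "k0 + m * s < l1" "0 \<le> j0 + m * t" "j0 + m * t < l2" "even (s + t)"
      unfolding lat_char[OF L] by blast
    have "- 2 * m < m * s" "m * s < 2 * m" "- m < m * t" "m * t < 2 * m" using st kj l by linarith+
    hence "s = -1 \<or> s = 0 \<or> s = 1" "t = 0 \<or> t = 1" using s3[of m s] s01[of m t] L by auto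
    then show "k0 < l1 \<or> (m \<le> k0 \<and> j0 + m < l2)" using st kj l by auto
  next
    assume "k0 < l1 \<or> (m \<le> k0 \<and> j0 + m < l2)"
    then show "\<exists>k' j'. 0 \<le> k' \<and> k' < l1 \<and> 0 \<le> j' \<and> j' < l2 \<and> lat L k0 j0 k' j'"
    proof
      assume "k0 < l1"
      moreover have "lat L k0 j0 k0 j0" unfolding lat_def by simp
      ultimately show ?thesis using kj l by (intro exI[of _ k0] exI[of _ j0]) auto
    next
      assume a: "m \<le> k0 \<and> j0 + m < l2"
      have "lat L k0 j0 (k0 + m * (-1)) (j0 + m * 1)" unfolding lat_char[OF L] by fastforce
      hence "lat L k0 j0 (k0 - m) (j0 + m)" by simp
      thus ?thesis using a kj l by (intro exI[of _ "k0 - m"] exI[of _ "j0 + m"]) auto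
    qed
  qed
  have B: "(\<exists>k' j'. l1 \<le> k' \<and> k' < 2 * m \<and> l2 - m \<le> j' \<and> j' < m \<and> lat L k0 j0 k' j') \<longleftrightarrow>
           (l1 \<le> k0 \<and> l2 - m \<le> j0)"
  proof
    assume "\<exists>k' j'. l1 \<le> k' \<and> k' < 2 * m \<and> l2 - m \<le> j' \<and> j' < m \<and> lat L k0 j0 k' j'"
    then obtain s t where st: "l1 \<le> k0 + m * s" "k0 + m * s < 2 * m" "l2 - m \<le> j0 + m * t" "j0 + m * t < m" "even (s + t)"
      unfolding lat_char[OF L] by blast
    have "- 2 * m < m * s" "m * s < 2 * m" "- m < m * t" "m * t < m" using st kj l by linarith+
    hence "t = 0" "s = -1 \<or> s = 0 \<or> s = 1" using s3[of m s] s0[of m t] L by auto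
    then show "l1 \<le> k0 \<and> l2 - m \<le> j0" using st kj l by auto
  next
    assume "l1 \<le> k0 \<and> l2 - m \<le> j0"
    moreover have "lat L k0 j0 k0 j0" unfolding lat_def by simp
    ultimately show "\<exists>k' j'. l1 \<le> k' \<and> k' < 2 * m \<and> l2 - m \<le> j' \<and> j' < m \<and> lat L k0 j0 k' j'"
      using kj by (intro exI[of _ k0] exI[of _ j0]) auto
  qed
  show ?thesis unfolding A B using kj l by auto
qed

lemma K:
  assumes L: "L = 2 * m" "0 < m" and l: "m \<le> l1" "l1 \<le> 2 * m" "m \<le> l2" "l2 \<le> 2 * m"
  shows "(\<exists>k' j'. 0 \<le> k' \<and> k' < l1 \<and> 0 \<le> j' \<and> j' < l2 \<and> lat L k j k' j') \<longleftrightarrow>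
         \<not> (\<exists>k' j'. l1 \<le> k' \<and> k' < 2 * m \<and> l2 - m \<le> j' \<and> j' < m \<and> lat L k j k' j')"
proof -
  obtain k0 j0 where kj: "0 \<le> k0" "k0 < 2 * m" "0 \<le> j0" "j0 < m" and c: "lat L k j k0 j0"
    using canon[OF L] by blast
  have e: "\<And>k' j'. lat L k j k' j' \<longleftrightarrow> lat L k0 j0 k' j'"
    using c lat_trans lat_sym by metis
  show ?thesis unfolding e using K0[OF L l kj] .
qed

lemma K_shift:
  assumes L: "L = 2 * m" "0 < m" and l: "m \<le> l1" "l1 \<le> 2 * m" "m \<le> l2" "l2 \<le> 2 * m"
  shows "(\<exists>k' j'. p \<le> k' \<and> k' < p + l1 \<and> q \<le> j' \<and> j' < q + l2 \<and> lat L k j k' j') \<longleftrightarrow>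
         \<not> (\<exists>k' j'. p + l1 \<le> k' \<and> k' < p + 2 * m \<and> q + l2 - m \<le> j' \<and> j' < q + m \<and> lat L k j k' j')"
proof -
  have e: "\<And>k' j'. lat L k j k' j' \<longleftrightarrow> lat L (k - p) (j - q) (k' - p) (j' - q)"
    using lat_shift[of L _ _ _ _ "-p" "-q"] by simp
  have 1: "(\<exists>k' j'. p \<le> k' \<and> k' < p + l1 \<and> q \<le> j' \<and> j' < q + l2 \<and> lat L k j k' j') \<longleftrightarrow>
     (\<exists>k' j'. 0 \<le> k' \<and> k' < l1 \<and> 0 \<le> j' \<and> j' < l2 \<and> lat L (k - p) (j - q) k' j')"
    unfolding e
    apply (rule iffI)
     apply (elim exE, rule_tac x="k' - p" in exI, rule_tac x="j' - q" in exI, simp)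
    apply (elim exE, rule_tac x="k' + p" in exI, rule_tac x="j' + q" in exI, simp)
    done
  have 2: "(\<exists>k' j'. p + l1 \<le> k' \<and> k' < p + 2 * m \<and> q + l2 - m \<le> j' \<and> j' < q + m \<and> lat L k j k' j') \<longleftrightarrow>
     (\<exists>k' j'. l1 \<le> k' \<and> k' < 2 * m \<and> l2 - m \<le> j' \<and> j' < m \<and> lat L (k - p) (j - q) k' j')"
    unfolding e
    apply (rule iffI)
     apply (elim exE, rule_tac x="k' - p" in exI, rule_tac x="j' - q" in exI, simp)
    apply (elim exE, rule_tac x="k' + p" in exI, rule_tac x="j' + q" in exI, simp)
    done
  show ?thesis unfolding 1 2 by (rule K[OF L l])
qed

lemma K_swap:
  assumes L: "L = 2 * m" "0 < m" and l: "m \<le> l1" "l1 \<le> 2 * m" "m \<le> l2" "l2 \<le> 2 * m"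
  shows "(\<exists>k' j'. 0 \<le> k' \<and> k' < l1 \<and> 0 \<le> j' \<and> j' < l2 \<and> lat L k j k' j') \<longleftrightarrow>
         \<not> (\<exists>k' j'. l1 - m \<le> k' \<and> k' < m \<and> l2 \<le> j' \<and> j' < 2 * m \<and> lat L k j k' j')"
  using K[OF L l(3,4,1,2), of j k] unfolding lat_swap[of L j k] by blast


lemma Mp_in_Mi: "Mp L e k j \<in> Mi L e ({a..<b} \<times> {c..<d}) \<longleftrightarrow>
   (\<exists>k' j'. a \<le> k' \<and> k' < b \<and> c \<le> j' \<and> j' < d \<and> lat L k j k' j')"
proof
  assume "Mp L e k j \<in> Mi L e ({a..<b} \<times> {c..<d})"
  then obtain k' j' where "(k', j') \<in> {a..<b} \<times> {c..<d}" "Mp L e k j = Mp L e k' j'"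
    unfolding Mi_def by auto
  thus "\<exists>k' j'. a \<le> k' \<and> k' < b \<and> c \<le> j' \<and> j' < d \<and> lat L k j k' j'"
    unfolding Mp_eq by auto
next
  assume "\<exists>k' j'. a \<le> k' \<and> k' < b \<and> c \<le> j' \<and> j' < d \<and> lat L k j k' j'"
  then obtain k' j' where "(k', j') \<in> {a..<b} \<times> {c..<d}" "Mp L e k j = Mp L e k' j'"
    unfolding Mp_eq by auto
  thus "Mp L e k j \<in> Mi L e ({a..<b} \<times> {c..<d})"
    unfolding Mi_def by force
qed

lemma Np_in_Ni: "Np L e k j \<in> Ni L e ({a..<b} \<times> {c..<d}) \<longleftrightarrow>
   (\<exists>k' j'. a \<le> k' \<and> k' < b \<and> c \<le> j' \<and> j' < d \<and> lat L k j k' j')"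
proof
  assume "Np L e k j \<in> Ni L e ({a..<b} \<times> {c..<d})"
  then obtain k' j' where "(k', j') \<in> {a..<b} \<times> {c..<d}" "Np L e k j = Np L e k' j'"
    unfolding Ni_def by auto
  thus "\<exists>k' j'. a \<le> k' \<and> k' < b \<and> c \<le> j' \<and> j' < d \<and> lat L k j k' j'"
    unfolding Np_eq by auto
next
  assume "\<exists>k' j'. a \<le> k' \<and> k' < b \<and> c \<le> j' \<and> j' < d \<and> lat L k j k' j'"
  then obtain k' j' where "(k', j') \<in> {a..<b} \<times> {c..<d}" "Np L e k j = Np L e k' j'"
    unfolding Np_eq by auto
  thus "Np L e k j \<in> Ni L e ({a..<b} \<times> {c..<d})"
    unfolding Ni_def by force
qed

lemma Mp_notin_Ni: "even L \<Longrightarrow> Mp L e k j \<notin> Ni L e A"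
  unfolding Ni_def by (auto simp: Mp_Np_neq)

lemma Np_notin_Mi: "even L \<Longrightarrow> Np L e k j \<notin> Mi L e A"
  unfolding Mi_def by (auto simp: Np_Mp_neq)

lemma Mi_sites: "0 < L \<Longrightarrow> Mi L e A \<subseteq> sites L"
  unfolding Mi_def using Mp_sites[of L e] by auto
lemma Ni_sites: "0 < L \<Longrightarrow> Ni L e A \<subseteq> sites L"
  unfolding Ni_def using Np_sites[of L e] by auto

lemma Mp_odd: "even L \<Longrightarrow> 0 < L \<Longrightarrow> e \<in> odd_sites L \<Longrightarrow> Mp L e k j \<in> odd_sites L"
  using Mp_par[of L e k j] Mp_sites[of L e k j] unfolding odd_sites_def by auto
lemma Np_even: "even L \<Longrightarrow> 0 < L \<Longrightarrow> e \<in> odd_sites L \<Longrightarrow> Np L e k j \<in> even_sites L"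
  using Np_par[of L e k j] Np_sites[of L e k j] unfolding odd_sites_def even_sites_def by auto

lemma Mi_odd: "even L \<Longrightarrow> 0 < L \<Longrightarrow> e \<in> odd_sites L \<Longrightarrow> Mi L e A \<subseteq> odd_sites L"
  unfolding Mi_def using Mp_odd[of L e] by auto
lemma Ni_even: "even L \<Longrightarrow> 0 < L \<Longrightarrow> e \<in> odd_sites L \<Longrightarrow> Ni L e A \<subseteq> even_sites L"
  unfolding Ni_def using Np_even[of L e] by auto

lemma odd_even_disj: "odd_sites L \<inter> even_sites L = {}"
  unfolding odd_sites_def even_sites_def by auto

lemma modl: "((a::int) mod L + b) mod L = (a + b) mod L"
  by (rule mod_add_left_eq)
lemma Mp_base: "Mp L (Np L e c d) k j = Np L e (c + k) (d + j)"
proof -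
  have 1: "(fst e + 1 + c + d) mod L + k + j = (fst e + 1 + c + d) mod L + (k + j)" by simp
  have 2: "(snd e + c - d) mod L + k - j = (snd e + c - d) mod L + (k - j)" by simp
  show ?thesis unfolding Mp_def Np_def fst_conv snd_conv 1 2 modl by (simp add: algebra_simps)
qed
lemma Np_base: "Np L (Np L e c d) k j = Mp L e (c + 1 + k) (d + 1 + j)"
proof -
  have 1: "(fst e + 1 + c + d) mod L + 1 + k + j = (fst e + 1 + c + d) mod L + (1 + k + j)" by simp
  have 2: "(snd e + c - d) mod L + k - j = (snd e + c - d) mod L + (k - j)" by simp
  show ?thesis unfolding Mp_def Np_def fst_conv snd_conv 1 2 modl by (simp add: algebra_simps)
qed

lemma shift_box:
  fixes c d x y z w :: int
  shows "(\<lambda>(a,b). (c + a, d + b)) ` ({x..<y} \<times> {z..<w}) = {c + x..<c + y} \<times> {d + z..<d + w}"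
proof (rule set_eqI)
  fix p :: "int \<times> int"
  obtain p1 p2 where p: "p = (p1, p2)" by (cases p)
  have e: "p = (\<lambda>(a,b). (c + a, d + b)) (p1 - c, p2 - d)" using p by simp
  show "p \<in> (\<lambda>(a,b). (c + a, d + b)) ` ({x..<y} \<times> {z..<w}) \<longleftrightarrow> p \<in> {c + x..<c + y} \<times> {d + z..<d + w}"
  proof
    assume "p \<in> (\<lambda>(a,b). (c + a, d + b)) ` ({x..<y} \<times> {z..<w})"
    thus "p \<in> {c + x..<c + y} \<times> {d + z..<d + w}" by auto
  next
    assume "p \<in> {c + x..<c + y} \<times> {d + z..<d + w}"
    hence "(p1 - c, p2 - d) \<in> {x..<y} \<times> {z..<w}" using p by auto
    thus "p \<in> (\<lambda>(a,b). (c + a, d + b)) ` ({x..<y} \<times> {z..<w})" using e by (rule rev_image_eqI)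
  qed
qed

lemma Mi_base: "Mi L (Np L e c d) ({x..<y} \<times> {z..<w}) = Ni L e ({c + x..<c + y} \<times> {d + z..<d + w})"
proof -
  have "Mi L (Np L e c d) ({x..<y} \<times> {z..<w}) = Ni L e ((\<lambda>(a,b). (c + a, d + b)) ` ({x..<y} \<times> {z..<w}))"
    unfolding Mi_def Ni_def image_image by (simp add: Mp_base case_prod_beta)
  thus ?thesis unfolding shift_box .
qed

lemma Ni_base: "Ni L (Np L e c d) ({x..<y} \<times> {z..<w}) = Mi L e ({c + 1 + x..<c + 1 + y} \<times> {d + 1 + z..<d + 1 + w})"
proof -
  have "Ni L (Np L e c d) ({x..<y} \<times> {z..<w}) = Mi L e ((\<lambda>(a,b). (c + 1 + a, d + 1 + b)) ` ({x..<y} \<times> {z..<w}))"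
    unfolding Mi_def Ni_def image_image by (simp add: Np_base case_prod_beta)
  thus ?thesis unfolding shift_box .
qed

lemma lat_inj:
  assumes L: "L = 2 * m" "0 < m" and lat: "lat L k j k' j'"
    and b: "(\<bar>k - k'\<bar> < 2 * m \<and> \<bar>j - j'\<bar> < m) \<or> (\<bar>k - k'\<bar> < m \<and> \<bar>j - j'\<bar> < 2 * m)"
  shows "k = k' \<and> j = j'"
proof -
  obtain s t where st: "k' = k + m * s" "j' = j + m * t" "even (s + t)"
    using lat unfolding lat_char[OF L] by blast
  show ?thesis
  proof (cases "\<bar>k - k'\<bar> < 2 * m \<and> \<bar>j - j'\<bar> < m")
    case True
    have "- 2 * m < m * s" "m * s < 2 * m" "- m < m * t" "m * t < m" using True st by auto
    hence "t = 0" "s = -1 \<or> s = 0 \<or> s = 1" using s3[of m s] s0[of m t] L by auto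
    thus ?thesis using st by auto
  next
    case False
    hence F: "\<bar>k - k'\<bar> < m \<and> \<bar>j - j'\<bar> < 2 * m" using b by auto
    have "- 2 * m < m * t" "m * t < 2 * m" "- m < m * s" "m * s < m" using F st by auto
    hence "s = 0" "t = -1 \<or> t = 0 \<or> t = 1" using s3[of m t] s0[of m s] L by auto
    thus ?thesis using st by auto
  qed
qed

lemma card_Mi:
  assumes L: "L = 2 * m" "0 < m" and w: "(b - a \<le> 2 * m \<and> d - c \<le> m) \<or> (b - a \<le> m \<and> d - c \<le> 2 * m)"
  shows "card (Mi L e ({a..<b} \<times> {c..<d})) = nat (b - a) * nat (d - c)"
proof -
  have "inj_on (\<lambda>(k,j). Mp L e k j) ({a..<b} \<times> {c..<d})"
  proof (rule inj_onI)
    fix x y assume xy: "x \<in> {a..<b} \<times> {c..<d}" "y \<in> {a..<b} \<times> {c..<d}"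
       "(\<lambda>(k,j). Mp L e k j) x = (\<lambda>(k,j). Mp L e k j) y"
    obtain k j k' j' where xy': "x = (k, j)" "y = (k', j')" by (cases x, cases y)
    have "(k, j) \<in> {a..<b} \<times> {c..<d}" "(k', j') \<in> {a..<b} \<times> {c..<d}"
       "Mp L e k j = Mp L e k' j'" using xy unfolding xy' by auto
    moreover have "(\<bar>k - k'\<bar> < 2 * m \<and> \<bar>j - j'\<bar> < m) \<or> (\<bar>k - k'\<bar> < m \<and> \<bar>j - j'\<bar> < 2 * m)"
      using w calculation(1,2) by auto
    ultimately show "x = y" using lat_inj[OF L, of k j k' j'] unfolding Mp_eq xy' by blast
  qed
  thus ?thesis unfolding Mi_def by (simp add: card_image card_cartesian_product)
qed

lemma card_Ni:
  assumes L: "L = 2 * m" "0 < m" and w: "(b - a \<le> 2 * m \<and> d - c \<le> m) \<or> (b - a \<le> m \<and> d - c \<le> 2 * m)"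
  shows "card (Ni L e ({a..<b} \<times> {c..<d})) = nat (b - a) * nat (d - c)"
proof -
  have "inj_on (\<lambda>(k,j). Np L e k j) ({a..<b} \<times> {c..<d})"
  proof (rule inj_onI)
    fix x y assume xy: "x \<in> {a..<b} \<times> {c..<d}" "y \<in> {a..<b} \<times> {c..<d}"
       "(\<lambda>(k,j). Np L e k j) x = (\<lambda>(k,j). Np L e k j) y"
    obtain k j k' j' where xy': "x = (k, j)" "y = (k', j')" by (cases x, cases y)
    have "(k, j) \<in> {a..<b} \<times> {c..<d}" "(k', j') \<in> {a..<b} \<times> {c..<d}"
       "Np L e k j = Np L e k' j'" using xy unfolding xy' by auto
    moreover have "(\<bar>k - k'\<bar> < 2 * m \<and> \<bar>j - j'\<bar> < m) \<or> (\<bar>k - k'\<bar> < m \<and> \<bar>j - j'\<bar> < 2 * m)"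
      using w calculation(1,2) by auto
    ultimately show "x = y" using lat_inj[OF L, of k j k' j'] unfolding Np_eq xy' by blast
  qed
  thus ?thesis unfolding Ni_def by (simp add: card_image card_cartesian_product)
qed


lemma canon_any:
  assumes L: "L = 2 * m" "0 < m" and l: "(2 * m \<le> l1 \<and> m \<le> l2) \<or> (m \<le> l1 \<and> 2 * m \<le> l2)"
  shows "\<exists>k' j'. 0 \<le> k' \<and> k' < l1 \<and> 0 \<le> j' \<and> j' < l2 \<and> lat L k j k' j'"
proof (cases "2 * m \<le> l1 \<and> m \<le> l2")
  case True
  obtain k0 j0 where "0 \<le> k0" "k0 < 2 * m" "0 \<le> j0" "j0 < m" "lat L k j k0 j0" using canon[OF L] by blast
  thus ?thesis using True by (intro exI[of _ k0] exI[of _ j0]) auto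
next
  case False
  hence F: "m \<le> l1 \<and> 2 * m \<le> l2" using l by auto
  obtain k0 j0 where "0 \<le> k0" "k0 < m" "0 \<le> j0" "j0 < 2 * m" "lat L k j k0 j0" using canon'[OF L] by blast
  thus ?thesis using F by (intro exI[of _ k0] exI[of _ j0]) auto
qed

lemma N_all:
  assumes L: "L = 2 * m" "0 < m" and l: "(2 * m - 1 \<le> l1 \<and> m - 1 \<le> l2) \<or> (m - 1 \<le> l1 \<and> 2 * m - 1 \<le> l2)"
  shows "\<exists>k' j'. -1 \<le> k' \<and> k' < l1 \<and> -1 \<le> j' \<and> j' < l2 \<and> lat L k j k' j'"
proof -
  obtain k' j' where kj: "0 \<le> k'" "k' < l1 + 1" "0 \<le> j'" "j' < l2 + 1" "lat L (k + 1) (j + 1) k' j'"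
    using canon_any[OF L, of "l1 + 1" "l2 + 1" "k + 1" "j + 1"] l by auto
  have "lat L k j (k' - 1) (j' - 1)" using kj(5) lat_shift[of L "k + 1" "j + 1" k' j' "-1" "-1"] by simp
  thus ?thesis using kj by (intro exI[of _ "k' - 1"] exI[of _ "j' - 1"]) auto
qed

lemma rh_sites: "even L \<Longrightarrow> 0 < L \<Longrightarrow> 1 \<le> l1 \<Longrightarrow> 1 \<le> l2 \<Longrightarrow> rhombus L l1 l2 e \<subseteq> sites L"
  unfolding rhombus_eq by (metis Mi_sites Ni_sites Un_least)


lemma part4:
  assumes L: "L = 2 * m" "0 < m" "even L"
    and l: "(l1 = L \<and> m \<le> l2 \<and> l2 \<le> L) \<or> (l2 = L \<and> m \<le> l1 \<and> l1 \<le> L)"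
  shows "rhombus L l1 l2 e = sites L"
proof
  have l1: "1 \<le> l1" "1 \<le> l2" using l L by auto
  show "rhombus L l1 l2 e \<subseteq> sites L" using rh_sites[OF L(3) _ l1] L by auto
  show "sites L \<subseteq> rhombus L l1 l2 e"
  proof
    fix v assume v: "v \<in> sites L"
    have R: "rhombus L l1 l2 e = Mi L e ({0..<l1} \<times> {0..<l2}) \<union> Ni L e ({-1..<l1} \<times> {-1..<l2})"
      using rhombus_eq[OF L(3) _ l1] L by auto
    have Lp: "0 < L" using L by auto
    from cover[OF L(3) Lp v, of e] show "v \<in> rhombus L l1 l2 e"
    proof (elim disjE exE)
      fix k j assume vv: "v = Mp L e k j"
      have "\<exists>k' j'. 0 \<le> k' \<and> k' < l1 \<and> 0 \<le> j' \<and> j' < l2 \<and> lat L k j k' j'"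
        using canon_any[OF L(1,2)] l L by auto
      hence "Mp L e k j \<in> Mi L e ({0..<l1} \<times> {0..<l2})" unfolding Mp_in_Mi .
      thus ?thesis unfolding R vv by blast
    next
      fix k j assume vv: "v = Np L e k j"
      have "\<exists>k' j'. -1 \<le> k' \<and> k' < l1 \<and> -1 \<le> j' \<and> j' < l2 \<and> lat L k j k' j'"
        using N_all[OF L(1,2)] l L by auto
      hence "Np L e k j \<in> Ni L e ({-1..<l1} \<times> {-1..<l2})" unfolding Np_in_Ni .
      thus ?thesis unfolding R vv by blast
    qed
  qed
qed

lemma Np_wrap1: "lat L (-1) j (L - 1) j"
  unfolding lat_def by simp
lemma Np_wrap2: "lat L k (-1) k (L - 1)"
  unfolding lat_def by simp

lemma part3A:
  assumes L: "L = 2 * m" "0 < m" "even L" and e: "e \<in> odd_sites L"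
    and l: "l1 = L" "1 \<le> l2" "l2 < m"
  shows "int (card (rhombus L l1 l2 e \<inter> odd_sites L)) = L * l2 \<and>
         int (card (rhombus L l1 l2 e \<inter> even_sites L)) = L * (l2 + 1)"
proof -
  have l1: "1 \<le> l1" "1 \<le> l2" using l L by auto
  have R: "rhombus L l1 l2 e = Mi L e ({0..<l1} \<times> {0..<l2}) \<union> Ni L e ({-1..<l1} \<times> {-1..<l2})"
    using rhombus_eq[OF L(3) _ l1] L by auto
  have O: "Mi L e ({0..<l1} \<times> {0..<l2}) \<subseteq> odd_sites L" and E: "Ni L e ({-1..<l1} \<times> {-1..<l2}) \<subseteq> even_sites L"
    using Mi_odd Ni_even L e by auto
  have "rhombus L l1 l2 e \<inter> odd_sites L = Mi L e ({0..<l1} \<times> {0..<l2})"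
    unfolding R using O E odd_even_disj by blast
  moreover have "card (Mi L e ({0..<l1} \<times> {0..<l2})) = nat (l1 - 0) * nat (l2 - 0)"
    by (rule card_Mi[OF L(1,2)]) (use l L in auto)
  moreover have "rhombus L l1 l2 e \<inter> even_sites L = Ni L e ({-1..<l1} \<times> {-1..<l2})"
    unfolding R using O E odd_even_disj by blast
  moreover have "Ni L e ({-1..<l1} \<times> {-1..<l2}) = Ni L e ({0..<l1} \<times> {-1..<l2})"
  proof (rule set_eqI)
    fix v
    show "v \<in> Ni L e ({-1..<l1} \<times> {-1..<l2}) \<longleftrightarrow> v \<in> Ni L e ({0..<l1} \<times> {-1..<l2})"
    proof
      assume "v \<in> Ni L e ({-1..<l1} \<times> {-1..<l2})"
      then obtain k j where kj: "-1 \<le> k" "k < l1" "-1 \<le> j" "j < l2" and v: "v = Np L e k j"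
        unfolding Ni_def by auto
      show "v \<in> Ni L e ({0..<l1} \<times> {-1..<l2})"
      proof (cases "k = -1")
        case True
        hence "v = Np L e (L - 1) j" using v Np_eq Np_wrap1 by metis
        thus ?thesis using kj l L unfolding Ni_def by force
      next
        case False
        thus ?thesis using kj v unfolding Ni_def by force
      qed
    next
      assume "v \<in> Ni L e ({0..<l1} \<times> {-1..<l2})"
      thus "v \<in> Ni L e ({-1..<l1} \<times> {-1..<l2})" unfolding Ni_def by force
    qed
  qed
  moreover have "card (Ni L e ({0..<l1} \<times> {-1..<l2})) = nat (l1 - 0) * nat (l2 - -1)"
    by (rule card_Ni[OF L(1,2)]) (use l L in auto)
  ultimately show ?thesis using l L by simp
qed

lemma part3B:
  assumes L: "L = 2 * m" "0 < m" "even L" and e: "e \<in> odd_sites L"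
    and l: "l2 = L" "1 \<le> l1" "l1 < m"
  shows "int (card (rhombus L l1 l2 e \<inter> odd_sites L)) = L * l1 \<and>
         int (card (rhombus L l1 l2 e \<inter> even_sites L)) = L * (l1 + 1)"
proof -
  have l1: "1 \<le> l1" "1 \<le> l2" using l L by auto
  have R: "rhombus L l1 l2 e = Mi L e ({0..<l1} \<times> {0..<l2}) \<union> Ni L e ({-1..<l1} \<times> {-1..<l2})"
    using rhombus_eq[OF L(3) _ l1] L by auto
  have O: "Mi L e ({0..<l1} \<times> {0..<l2}) \<subseteq> odd_sites L" and E: "Ni L e ({-1..<l1} \<times> {-1..<l2}) \<subseteq> even_sites L"
    using Mi_odd Ni_even L e by auto
  have "rhombus L l1 l2 e \<inter> odd_sites L = Mi L e ({0..<l1} \<times> {0..<l2})"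
    unfolding R using O E odd_even_disj by blast
  moreover have "card (Mi L e ({0..<l1} \<times> {0..<l2})) = nat (l1 - 0) * nat (l2 - 0)"
    by (rule card_Mi[OF L(1,2)]) (use l L in auto)
  moreover have "rhombus L l1 l2 e \<inter> even_sites L = Ni L e ({-1..<l1} \<times> {-1..<l2})"
    unfolding R using O E odd_even_disj by blast
  moreover have "Ni L e ({-1..<l1} \<times> {-1..<l2}) = Ni L e ({-1..<l1} \<times> {0..<l2})"
  proof (rule set_eqI)
    fix v
    show "v \<in> Ni L e ({-1..<l1} \<times> {-1..<l2}) \<longleftrightarrow> v \<in> Ni L e ({-1..<l1} \<times> {0..<l2})"
    proof
      assume "v \<in> Ni L e ({-1..<l1} \<times> {-1..<l2})"
      then obtain k j where kj: "-1 \<le> k" "k < l1" "-1 \<le> j" "j < l2" and v: "v = Np L e k j"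
        unfolding Ni_def by auto
      show "v \<in> Ni L e ({-1..<l1} \<times> {0..<l2})"
      proof (cases "j = -1")
        case True
        hence "v = Np L e k (L - 1)" using v Np_eq Np_wrap2 by metis
        thus ?thesis using kj l L unfolding Ni_def by force
      next
        case False
        thus ?thesis using kj v unfolding Ni_def by force
      qed
    next
      assume "v \<in> Ni L e ({-1..<l1} \<times> {0..<l2})"
      thus "v \<in> Ni L e ({-1..<l1} \<times> {-1..<l2})" unfolding Ni_def by force
    qed
  qed
  moreover have "card (Ni L e ({-1..<l1} \<times> {0..<l2})) = nat (l1 - -1) * nat (l2 - 0)"
    by (rule card_Ni[OF L(1,2)]) (use l L in auto)
  ultimately show ?thesis using l L by (simp add: algebra_simps)
qed


lemma part2A:
  assumes L: "L = 2 * m" "0 < m" "even L" and e: "e \<in> odd_sites L"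
    and l: "l1 = L - 1" "m \<le> l2" "l2 \<le> L - 1"
  shows "sites L - rhombus L l1 l2 e = Mi L e ({L - 1..<L} \<times> {l2 - m..<m})"
proof (rule set_eqI)
  fix v
  have Lp: "0 < L" using L by auto
  have l1: "1 \<le> l1" "1 \<le> l2" using l L by auto
  have R: "rhombus L l1 l2 e = Mi L e ({0..<l1} \<times> {0..<l2}) \<union> Ni L e ({-1..<l1} \<times> {-1..<l2})"
    using rhombus_eq[OF L(3) Lp l1] .
  show "v \<in> sites L - rhombus L l1 l2 e \<longleftrightarrow> v \<in> Mi L e ({L - 1..<L} \<times> {l2 - m..<m})"
  proof (cases "v \<in> sites L")
    case False
    thus ?thesis using Mi_sites[OF Lp] by blast
  next
    case True
    from cover[OF L(3) Lp True, of e] show ?thesis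
    proof (elim disjE exE)
      fix k j assume vv: "v = Mp L e k j"
      have K1: "(\<exists>k' j'. 0 \<le> k' \<and> k' < l1 \<and> 0 \<le> j' \<and> j' < l2 \<and> lat L k j k' j') \<longleftrightarrow>
         \<not> (\<exists>k' j'. l1 \<le> k' \<and> k' < 2 * m \<and> l2 - m \<le> j' \<and> j' < m \<and> lat L k j k' j')"
        by (rule K[OF L(1,2)]) (use l L in auto)
      have "v \<in> rhombus L l1 l2 e \<longleftrightarrow> (\<exists>k' j'. 0 \<le> k' \<and> k' < l1 \<and> 0 \<le> j' \<and> j' < l2 \<and> lat L k j k' j')"
        unfolding R vv Un_iff Mp_in_Mi using Mp_notin_Ni[OF L(3)] by blast
      moreover have "v \<in> Mi L e ({L - 1..<L} \<times> {l2 - m..<m}) \<longleftrightarrow>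
          (\<exists>k' j'. l1 \<le> k' \<and> k' < 2 * m \<and> l2 - m \<le> j' \<and> j' < m \<and> lat L k j k' j')"
        unfolding vv Mp_in_Mi using l L by simp
      ultimately show ?thesis using K1 True by blast
    next
      fix k j assume vv: "v = Np L e k j"
      have "\<exists>k' j'. -1 \<le> k' \<and> k' < l1 \<and> -1 \<le> j' \<and> j' < l2 \<and> lat L k j k' j'"
        using N_all[OF L(1,2)] l L by auto
      hence "v \<in> rhombus L l1 l2 e" unfolding R vv Un_iff Np_in_Ni by blast
      moreover have "v \<notin> Mi L e ({L - 1..<L} \<times> {l2 - m..<m})" unfolding vv using Np_notin_Mi[OF L(3)] .
      ultimately show ?thesis by blast
    qed
  qed
qed

lemma part2B:
  assumes L: "L = 2 * m" "0 < m" "even L" and e: "e \<in> odd_sites L"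
    and l: "l2 = L - 1" "m \<le> l1" "l1 \<le> L - 1"
  shows "sites L - rhombus L l1 l2 e = Mi L e ({l1 - m..<m} \<times> {L - 1..<L})"
proof (rule set_eqI)
  fix v
  have Lp: "0 < L" using L by auto
  have l1: "1 \<le> l1" "1 \<le> l2" using l L by auto
  have R: "rhombus L l1 l2 e = Mi L e ({0..<l1} \<times> {0..<l2}) \<union> Ni L e ({-1..<l1} \<times> {-1..<l2})"
    using rhombus_eq[OF L(3) Lp l1] .
  show "v \<in> sites L - rhombus L l1 l2 e \<longleftrightarrow> v \<in> Mi L e ({l1 - m..<m} \<times> {L - 1..<L})"
  proof (cases "v \<in> sites L")
    case False
    thus ?thesis using Mi_sites[OF Lp] by blast
  next
    case True
    from cover[OF L(3) Lp True, of e] show ?thesis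
    proof (elim disjE exE)
      fix k j assume vv: "v = Mp L e k j"
      have K1: "(\<exists>k' j'. 0 \<le> k' \<and> k' < l1 \<and> 0 \<le> j' \<and> j' < l2 \<and> lat L k j k' j') \<longleftrightarrow>
         \<not> (\<exists>k' j'. l1 - m \<le> k' \<and> k' < m \<and> l2 \<le> j' \<and> j' < 2 * m \<and> lat L k j k' j')"
        by (rule K_swap[OF L(1,2)]) (use l L in auto)
      have "v \<in> rhombus L l1 l2 e \<longleftrightarrow> (\<exists>k' j'. 0 \<le> k' \<and> k' < l1 \<and> 0 \<le> j' \<and> j' < l2 \<and> lat L k j k' j')"
        unfolding R vv Un_iff Mp_in_Mi using Mp_notin_Ni[OF L(3)] by blast
      moreover have "v \<in> Mi L e ({l1 - m..<m} \<times> {L - 1..<L}) \<longleftrightarrow>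
          (\<exists>k' j'. l1 - m \<le> k' \<and> k' < m \<and> l2 \<le> j' \<and> j' < 2 * m \<and> lat L k j k' j')"
        unfolding vv Mp_in_Mi using l L by simp
      ultimately show ?thesis using K1 True by blast
    next
      fix k j assume vv: "v = Np L e k j"
      have "\<exists>k' j'. -1 \<le> k' \<and> k' < l1 \<and> -1 \<le> j' \<and> j' < l2 \<and> lat L k j k' j'"
        using N_all[OF L(1,2)] l L by auto
      hence "v \<in> rhombus L l1 l2 e" unfolding R vv Un_iff Np_in_Ni by blast
      moreover have "v \<notin> Mi L e ({l1 - m..<m} \<times> {L - 1..<L})" unfolding vv using Np_notin_Mi[OF L(3)] .
      ultimately show ?thesis by blast
    qed
  qed
qed

lemma part1:
  assumes L: "L = 2 * m" "0 < m" "even L" and e: "e \<in> odd_sites L"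
    and l: "m \<le> l1" "l1 \<le> L - 2" "m \<le> l2" "l2 \<le> L - 2"
  shows "sites L - rhombus L l1 l2 e = rhombus L (L - l1 - 1) (L - l2 - 1) (Np L e l1 (l2 - m))"
proof (rule set_eqI)
  fix v
  have Lp: "0 < L" using L by auto
  have l1: "1 \<le> l1" "1 \<le> l2" using l L by auto
  have l1': "1 \<le> L - l1 - 1" "1 \<le> L - l2 - 1" using l L by auto
  have R: "rhombus L l1 l2 e = Mi L e ({0..<l1} \<times> {0..<l2}) \<union> Ni L e ({-1..<l1} \<times> {-1..<l2})"
    using rhombus_eq[OF L(3) Lp l1] .
  have b1: "{l1 + 0..<l1 + (L - l1 - 1)} = {l1..<L - 1}" "{l2 - m + 0..<l2 - m + (L - l2 - 1)} = {l2 - m..<m - 1}"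
    "{l1 + 1 + -1..<l1 + 1 + (L - l1 - 1)} = {l1..<L}" "{l2 - m + 1 + -1..<l2 - m + 1 + (L - l2 - 1)} = {l2 - m..<m}"
    using L by (simp_all add: algebra_simps)
  have R2: "rhombus L (L - l1 - 1) (L - l2 - 1) (Np L e l1 (l2 - m)) =
     Ni L e ({l1..<L - 1} \<times> {l2 - m..<m - 1}) \<union> Mi L e ({l1..<L} \<times> {l2 - m..<m})"
    unfolding rhombus_eq[OF L(3) Lp l1'] Mi_base Ni_base b1 ..
  show "v \<in> sites L - rhombus L l1 l2 e \<longleftrightarrow> v \<in> rhombus L (L - l1 - 1) (L - l2 - 1) (Np L e l1 (l2 - m))"
  proof (cases "v \<in> sites L")
    case False
    thus ?thesis unfolding R2 using Mi_sites[OF Lp] Ni_sites[OF Lp] by blast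
  next
    case True
    from cover[OF L(3) Lp True, of e] show ?thesis
    proof (elim disjE exE)
      fix k j assume vv: "v = Mp L e k j"
      have K1: "(\<exists>k' j'. 0 \<le> k' \<and> k' < l1 \<and> 0 \<le> j' \<and> j' < l2 \<and> lat L k j k' j') \<longleftrightarrow>
         \<not> (\<exists>k' j'. l1 \<le> k' \<and> k' < 2 * m \<and> l2 - m \<le> j' \<and> j' < m \<and> lat L k j k' j')"
        by (rule K[OF L(1,2)]) (use l L in auto)
      have "v \<in> rhombus L l1 l2 e \<longleftrightarrow> (\<exists>k' j'. 0 \<le> k' \<and> k' < l1 \<and> 0 \<le> j' \<and> j' < l2 \<and> lat L k j k' j')"
        unfolding R vv Un_iff Mp_in_Mi using Mp_notin_Ni[OF L(3)] by blast
      moreover have "v \<in> rhombus L (L - l1 - 1) (L - l2 - 1) (Np L e l1 (l2 - m)) \<longleftrightarrow>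
          (\<exists>k' j'. l1 \<le> k' \<and> k' < 2 * m \<and> l2 - m \<le> j' \<and> j' < m \<and> lat L k j k' j')"
        unfolding R2 vv Un_iff Mp_in_Mi using Mp_notin_Ni[OF L(3)] L by auto
      ultimately show ?thesis using K1 True by blast
    next
      fix k j assume vv: "v = Np L e k j"
      have K1: "(\<exists>k' j'. -1 \<le> k' \<and> k' < -1 + (l1 + 1) \<and> -1 \<le> j' \<and> j' < -1 + (l2 + 1) \<and> lat L k j k' j') \<longleftrightarrow>
         \<not> (\<exists>k' j'. -1 + (l1 + 1) \<le> k' \<and> k' < -1 + 2 * m \<and> -1 + (l2 + 1) - m \<le> j' \<and> j' < -1 + m \<and> lat L k j k' j')"
        by (rule K_shift[OF L(1,2)]) (use l L in auto)
      have K2: "(\<exists>k' j'. -1 \<le> k' \<and> k' < l1 \<and> -1 \<le> j' \<and> j' < l2 \<and> lat L k j k' j') \<longleftrightarrow>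
         \<not> (\<exists>k' j'. l1 \<le> k' \<and> k' < L - 1 \<and> l2 - m \<le> j' \<and> j' < m - 1 \<and> lat L k j k' j')"
        using K1 L by (simp add: algebra_simps)
      have "v \<in> rhombus L l1 l2 e \<longleftrightarrow> (\<exists>k' j'. -1 \<le> k' \<and> k' < l1 \<and> -1 \<le> j' \<and> j' < l2 \<and> lat L k j k' j')"
        unfolding R vv Un_iff Np_in_Ni using Np_notin_Mi[OF L(3)] by blast
      moreover have "v \<in> rhombus L (L - l1 - 1) (L - l2 - 1) (Np L e l1 (l2 - m)) \<longleftrightarrow>
          (\<exists>k' j'. l1 \<le> k' \<and> k' < L - 1 \<and> l2 - m \<le> j' \<and> j' < m - 1 \<and> lat L k j k' j')"
        unfolding R2 vv Un_iff Np_in_Ni using Np_notin_Mi[OF L(3)] by blast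
      ultimately show ?thesis using K2 True by blast
    qed
  qed
qed



theorem lemma3p2:
  fixes L l1 l2 :: int and \<eta> :: site
  assumes "L \<ge> 6" and "even L"
    and "\<eta> \<in> odd_sites L"
    and "1 \<le> l1" and "l1 \<le> L" and "1 \<le> l2" and "l2 \<le> L"
  shows
   "(max l1 l2 \<le> L - 2 \<and> 2 * min l1 l2 \<ge> L \<longrightarrow>
       (\<exists>\<eta>' \<in> even_sites L.
          sites L - rhombus L l1 l2 \<eta> = rhombus L (L - l1 - 1) (L - l2 - 1) \<eta>'))
  \<and> (max l1 l2 = L - 1 \<and> 2 * min l1 l2 \<ge> L \<longrightarrow>
       sites L - rhombus L l1 l2 \<eta> \<subseteq> odd_sites L \<and>
       int (card (sites L - rhombus L l1 l2 \<eta>)) = L - min l1 l2)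
  \<and> (max l1 l2 = L \<and> 2 * min l1 l2 < L \<longrightarrow>
       int (card (rhombus L l1 l2 \<eta> \<inter> odd_sites L)) = L * min l1 l2 \<and>
       int (card (rhombus L l1 l2 \<eta> \<inter> even_sites L)) = L * (min l1 l2 + 1))
  \<and> (max l1 l2 = L \<and> 2 * min l1 l2 \<ge> L \<longrightarrow> rhombus L l1 l2 \<eta> = sites L)"
  proof -
  obtain m where Lm: "L = 2 * m" using assms(2) by (elim evenE)
  have m: "0 < m" using assms(1) Lm by auto
  have Lp: "0 < L" using assms(1) by auto
  note L = Lm m assms(2)
  have e: "\<eta> \<in> odd_sites L" by fact
  have P1: "max l1 l2 \<le> L - 2 \<and> 2 * min l1 l2 \<ge> L \<longrightarrow>
       (\<exists>\<eta>' \<in> even_sites L. sites L - rhombus L l1 l2 \<eta> = rhombus L (L - l1 - 1) (L - l2 - 1) \<eta>')"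
  proof
    assume a: "max l1 l2 \<le> L - 2 \<and> 2 * min l1 l2 \<ge> L"
    have l: "m \<le> l1" "l1 \<le> L - 2" "m \<le> l2" "l2 \<le> L - 2" using a Lm by (auto simp: min_def max_def split: if_splits)
    show "\<exists>\<eta>' \<in> even_sites L. sites L - rhombus L l1 l2 \<eta> = rhombus L (L - l1 - 1) (L - l2 - 1) \<eta>'"
      using part1[OF L e l] Np_even[OF assms(2) Lp e] by blast
  qed
  have P2: "max l1 l2 = L - 1 \<and> 2 * min l1 l2 \<ge> L \<longrightarrow>
       sites L - rhombus L l1 l2 \<eta> \<subseteq> odd_sites L \<and>
       int (card (sites L - rhombus L l1 l2 \<eta>)) = L - min l1 l2"
  proof
    assume a: "max l1 l2 = L - 1 \<and> 2 * min l1 l2 \<ge> L"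
    show "sites L - rhombus L l1 l2 \<eta> \<subseteq> odd_sites L \<and>
       int (card (sites L - rhombus L l1 l2 \<eta>)) = L - min l1 l2"
    proof (cases "l1 = L - 1")
      case True
      have l: "l1 = L - 1" "m \<le> l2" "l2 \<le> L - 1" using a True Lm by (auto simp: min_def max_def split: if_splits)
      have mn: "min l1 l2 = l2" using l by simp
      have c: "card (Mi L \<eta> ({L - 1..<L} \<times> {l2 - m..<m})) = nat (L - (L - 1)) * nat (m - (l2 - m))"
        by (rule card_Mi[OF Lm m]) (use l Lm in auto)
      show ?thesis unfolding part2A[OF L e l] mn using Mi_odd[OF assms(2) Lp e] c l Lm by simp
    next
      case False
      have l: "l2 = L - 1" "m \<le> l1" "l1 \<le> L - 1" using a False Lm by (auto simp: min_def max_def split: if_splits)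
      have mn: "min l1 l2 = l1" using l by simp
      have c: "card (Mi L \<eta> ({l1 - m..<m} \<times> {L - 1..<L})) = nat (m - (l1 - m)) * nat (L - (L - 1))"
        by (rule card_Mi[OF Lm m]) (use l Lm in auto)
      show ?thesis unfolding part2B[OF L e l] mn using Mi_odd[OF assms(2) Lp e] c l Lm by simp
    qed
  qed
  have P3: "max l1 l2 = L \<and> 2 * min l1 l2 < L \<longrightarrow>
       int (card (rhombus L l1 l2 \<eta> \<inter> odd_sites L)) = L * min l1 l2 \<and>
       int (card (rhombus L l1 l2 \<eta> \<inter> even_sites L)) = L * (min l1 l2 + 1)"
  proof
    assume a: "max l1 l2 = L \<and> 2 * min l1 l2 < L"
    show "int (card (rhombus L l1 l2 \<eta> \<inter> odd_sites L)) = L * min l1 l2 \<and>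
       int (card (rhombus L l1 l2 \<eta> \<inter> even_sites L)) = L * (min l1 l2 + 1)"
    proof (cases "l1 = L")
      case True
      have l: "l1 = L" "1 \<le> l2" "l2 < m" using a True Lm assms(6) by (auto simp: min_def max_def split: if_splits)
      have mn: "min l1 l2 = l2" using l Lm by simp
      show ?thesis unfolding mn using part3A[OF L e l] .
    next
      case False
      have l: "l2 = L" "1 \<le> l1" "l1 < m" using a False Lm assms(4) by (auto simp: min_def max_def split: if_splits)
      have mn: "min l1 l2 = l1" using l Lm by simp
      show ?thesis unfolding mn using part3B[OF L e l] .
    qed
  qed
  have P4: "max l1 l2 = L \<and> 2 * min l1 l2 \<ge> L \<longrightarrow> rhombus L l1 l2 \<eta> = sites L"
  proof
    assume a: "max l1 l2 = L \<and> 2 * min l1 l2 \<ge> L"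
    have l: "(l1 = L \<and> m \<le> l2 \<and> l2 \<le> L) \<or> (l2 = L \<and> m \<le> l1 \<and> l1 \<le> L)"
      using a Lm assms(5,7) by (auto simp: min_def max_def split: if_splits)
    show "rhombus L l1 l2 \<eta> = sites L" by (rule part4[OF L l])
  qed
  show ?thesis using P1 P2 P3 P4 by blast
qed

end
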